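(* For every $\gamma>0$ and every $E>0$ there exists a density operator $\varrho$ with $0<\operatorname{tr}[\varrho H]\le E+1$ such that $$\left\|\widetilde\varrho_{-}-\frac{{\cal N}_{-}(\gamma)[\varrho]}{\operatorname{tr}\big[{\cal N}_{-}(\gamma)[\varrho]\big]}\right\|_1\ \ge\ \sqrt{\frac{E}{E+1}},$$ and, likewise, for every $\gamma>0$ and $E>0$ there exists a density operator $\varrho$ with $0<\operatorname{tr}[\varrho H]\le E+1$ such that the same inequality holds with $\widetilde\varrho_{-},{\cal N}_{-}(\gamma)$ replaced by $\widetilde\varrho_{+},{\cal N}_{+}(\gamma)$.
   Context: ${\cal H}$ is a separable Hilbert space with orthonormal (Fock) basis $\{|n\rangle\}_{n=0}^{\infty}$; $a=\sum_{n\ge1}\sqrt{n}\,|n-1\rangle\langle n|$, $a^{\dagger}=\sum_{n\ge0}\sqrt{n+1}\,|n+1\rangle\langle n|$, $H=a^{\dagger}a$. For a density operator $\varrho$, $\operatorname{tr}[\varrho H^k]=\sum_n n^k\langle n|\varrho|n\rangle$. Ideal outputs: $\widetilde\varrho_{-}=a\varrho a^{\dagger}/\operatorname{tr}[a\varrho a^{\dagger}]$, $\widetilde\varrho_{+}=a^{\dagger}\varrho a/\operatorname{tr}[a^{\dagger}\varrho a]$ (defined for $0<\operatorname{tr}[\varrho H]<\infty$). For $\gamma>0$: ${\cal N}_{-}(\gamma)[\varrho]=(e^{2\gamma}-1)\,a e^{-\gamma H}\varrho e^{-\gamma H}a^{\dagger}$, ${\cal N}_{+}(\gamma)[\varrho]=(e^{2\gamma}-1)\,e^{-\gamma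 H}a^{\dagger}\varrho a e^{-\gamma H}$. $\|X\|_1=\operatorname{tr}\sqrt{X^{\dagger}X}$. *)

theory Defs
  imports "HOL-Analysis.Analysis"
begin

text \<open>Operators on the Fock space are represented by their (infinite) matrices
  in the Fock basis: X m n = <m|X|n>.\<close>

type_synonym fmat = "nat \<Rightarrow> nat \<Rightarrow> complex"

definition supp_vec :: "(nat \<Rightarrow> complex) \<Rightarrow> nat set" where
  "supp_vec x = {i. x i \<noteq> 0}"

definition mmul :: "fmat \<Rightarrow> fmat \<Rightarrow> fmat" where
  "mmul A B = (\<lambda>i j. \<Sum>\<^sub>\<infinity>k. A i k * B k j)"

definition adj :: "fmat \<Rightarrow> fmat" where
  "adj A = (\<lambda>i j. cnj (A j i))"

definition mscale :: "complex \<Rightarrow> fmat \<Rightarrow> fmat" where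
  "mscale c A = (\<lambda>i j. c * A i j)"

definition mtrace :: "fmat \<Rightarrow> complex" where
  "mtrace A = (\<Sum>\<^sub>\<infinity>n. A n n)"

definition ann :: fmat where
  "ann = (\<lambda>m n. if n = Suc m then complex_of_real (sqrt (real n)) else 0)"

definition cre :: fmat where
  "cre = (\<lambda>m n. if m = Suc n then complex_of_real (sqrt (real m)) else 0)"

text \<open>exp(-gamma H) with H = a^dagger a = diag(0,1,2,...)\<close>
definition expH :: "real \<Rightarrow> fmat" where
  "expH g = (\<lambda>m n. if m = n then complex_of_real (exp (- g * real n)) else 0)"

definition qform :: "fmat \<Rightarrow> (nat \<Rightarrow> complex) \<Rightarrow> complex" where
  "qform S x = (\<Sum>i\<in>supp_vec x. \<Sum>j\<in>supp_vec x. cnj (x i) * S i j * x j)"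

definition psd :: "fmat \<Rightarrow> bool" where
  "psd S \<longleftrightarrow> (\<forall>i j. S j i = cnj (S i j)) \<and>
     (\<forall>x. finite (supp_vec x) \<longrightarrow> 0 \<le> Re (qform S x))"

text \<open>matrix of a bounded operator on l^2\<close>
definition bounded_mat :: "fmat \<Rightarrow> bool" where
  "bounded_mat X \<longleftrightarrow> (\<exists>C. \<forall>x I. finite (supp_vec x) \<longrightarrow> finite I \<longrightarrow>
      (\<Sum>i\<in>I. (cmod (\<Sum>j\<in>supp_vec x. X i j * x j))\<^sup>2) \<le> C * (\<Sum>j\<in>supp_vec x. (cmod (x j))\<^sup>2))"

text \<open>|X| = sqrt(X^dagger X): the unique bounded positive square root\<close>
definition mabs :: "fmat \<Rightarrow> fmat" where
  "mabs X = (THE S. bounded_mat S \<and> psd S \<and> mmul S S = mmul (adj X) X)"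

definition trace_norm :: "fmat \<Rightarrow> real" where
  "trace_norm X = (\<Sum>\<^sub>\<infinity>n. Re (mabs X n n))"

definition density :: "fmat \<Rightarrow> bool" where
  "density \<rho> \<longleftrightarrow> psd \<rho> \<and> (\<lambda>n. \<rho> n n) summable_on UNIV \<and> mtrace \<rho> = 1"

text \<open>tr[rho H] = sum_n n <n|rho|n>\<close>
definition energy_finite :: "fmat \<Rightarrow> bool" where
  "energy_finite \<rho> \<longleftrightarrow> (\<lambda>n. real n * Re (\<rho> n n)) summable_on UNIV"

definition energy :: "fmat \<Rightarrow> real" where
  "energy \<rho> = (\<Sum>\<^sub>\<infinity>n. real n * Re (\<rho> n n))"

definition normalize :: "fmat \<Rightarrow> fmat" where
  "normalize X = mscale (1 / mtrace X) X"

definition ideal_minus :: "fmat \<Rightarrow> fmat" where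
  "ideal_minus \<rho> = normalize (mmul (mmul ann \<rho>) cre)"

definition ideal_plus :: "fmat \<Rightarrow> fmat" where
  "ideal_plus \<rho> = normalize (mmul (mmul cre \<rho>) ann)"

definition Nminus :: "real \<Rightarrow> fmat \<Rightarrow> fmat" where
  "Nminus g \<rho> = mscale (complex_of_real (exp (2 * g) - 1))
     (mmul (mmul (mmul (mmul ann (expH g)) \<rho>) (expH g)) cre)"

definition Nplus :: "real \<Rightarrow> fmat \<Rightarrow> fmat" where
  "Nplus g \<rho> = mscale (complex_of_real (exp (2 * g) - 1))
     (mmul (mmul (mmul (mmul (expH g) cre) \<rho>) ann) (expH g))"

end

theory Submission
  imports Defs
begin


definition dg :: "(nat \<Rightarrow> real) \<Rightarrow> fmat" where
  "dg d = (\<lambda>i j. if i = j then complex_of_real (d i) else 0)"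

lemma infsum_one:
  fixes f :: "nat \<Rightarrow> complex"
  assumes "\<And>k. k \<noteq> kk \<Longrightarrow> f k = 0"
  shows "infsum f UNIV = f kk"
proof -
  have "infsum f UNIV = infsum f {kk}"
    by (rule infsum_cong_neutral) (use assms in auto)
  then show ?thesis by simp
qed

lemma infsum_fin:
  fixes f :: "nat \<Rightarrow> 'b::{comm_monoid_add, t2_space}"
  assumes "finite F" "\<And>k. k \<notin> F \<Longrightarrow> f k = 0"
  shows "infsum f UNIV = sum f F" "f summable_on UNIV"
proof -
  have "infsum f UNIV = infsum f F"
    by (rule infsum_cong_neutral) (use assms in auto)
  then show "infsum f UNIV = sum f F" using assms by simp
  have "f summable_on F" using assms by simp
  then show "f summable_on UNIV"
    using summable_on_cong_neutral[of F UNIV f f] assms by auto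
qed

lemma mmul_ann_left: "mmul ann X = (\<lambda>i j. complex_of_real (sqrt (real (Suc i))) * X (Suc i) j)"
  unfolding mmul_def ann_def
  apply (rule ext)+
  subgoal for i j by (subst infsum_one[where kk="Suc i"]) auto
  done

lemma mmul_cre_right: "mmul X cre = (\<lambda>i j. X i (Suc j) * complex_of_real (sqrt (real (Suc j))))"
  unfolding mmul_def cre_def
  apply (rule ext)+
  subgoal for i j by (subst infsum_one[where kk="Suc j"]) auto
  done

lemma mmul_cre_left: "mmul cre X = (\<lambda>i j. if i = 0 then 0 else complex_of_real (sqrt (real i)) * X (i - 1) j)"
  unfolding mmul_def cre_def
  apply (rule ext)+
  subgoal for i j by (subst infsum_one[where kk="i - 1"]) auto
  done

lemma mmul_ann_right: "mmul X ann = (\<lambda>i j. if j = 0 then 0 else X i (j - 1) * complex_of_real (sqrt (real j)))"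
  unfolding mmul_def ann_def
  apply (rule ext)+
  subgoal for i j by (subst infsum_one[where kk="j - 1"]) auto
  done

lemma mmul_expH_left: "mmul (expH g) X = (\<lambda>i j. complex_of_real (exp (- g * real i)) * X i j)"
  unfolding mmul_def expH_def
  apply (rule ext)+
  subgoal for i j by (subst infsum_one[where kk=i]) auto
  done

lemma mmul_expH_right: "mmul X (expH g) = (\<lambda>i j. X i j * complex_of_real (exp (- g * real j)))"
  unfolding mmul_def expH_def
  apply (rule ext)+
  subgoal for i j by (subst infsum_one[where kk=j]) auto
  done

lemma mmul_dg: "mmul (dg d) (dg e) = dg (\<lambda>i. d i * e i)"
  unfolding mmul_def dg_def
  apply (rule ext)+
  subgoal for i j by (subst infsum_one[where kk=i]) auto
  done

lemma adj_dg: "adj (dg d) = dg d"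
  unfolding adj_def dg_def by (auto simp: fun_eq_iff)

lemma minus_dg: "dg d - dg e = dg (\<lambda>i. d i - e i)"
  unfolding dg_def by (auto simp: fun_eq_iff)

lemma mtrace_dg:
  assumes "finite F" "\<And>k. k \<notin> F \<Longrightarrow> d k = 0"
  shows "mtrace (dg d) = complex_of_real (sum d F)"
  unfolding mtrace_def dg_def using infsum_fin(1)[of F "\<lambda>n. complex_of_real (d n)"] assms by simp

lemma normalize_dg:
  assumes "finite F" "\<And>k. k \<notin> F \<Longrightarrow> d k = 0"
  shows "normalize (dg d) = dg (\<lambda>i. d i / sum d F)"
  using mtrace_dg[OF assms] unfolding normalize_def mscale_def by (auto simp: dg_def fun_eq_iff)

lemma mscale_dg: "mscale (complex_of_real c) (dg d) = dg (\<lambda>i. c * d i)"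
  unfolding mscale_def dg_def by (auto simp: fun_eq_iff)

lemma mmul_dg_right: "mmul X (dg d) = (\<lambda>i j. X i j * complex_of_real (d j))"
  unfolding mmul_def dg_def
  apply (rule ext)+
  subgoal for i j by (subst infsum_one[where kk=j]) auto
  done

lemma sq_sqrt_c: "complex_of_real (sqrt (real n)) * complex_of_real (sqrt (real n)) = complex_of_real (real n)"
  by (simp flip: of_real_mult)




lemma sq3: assumes "0 \<le> x" shows "complex_of_real (sqrt x) * z * complex_of_real (sqrt x) = complex_of_real x * z"
proof -
  have "complex_of_real (sqrt x) * complex_of_real (sqrt x) = complex_of_real x"
    using assms by (simp flip: of_real_mult)
  then show ?thesis by (simp add: algebra_simps)
qed

lemma ideal_minus_dg_raw: "mmul (mmul ann (dg r)) cre = dg (\<lambda>i. real (Suc i) * r (Suc i))"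
  unfolding mmul_cre_right mmul_dg_right ann_def
  by (auto simp: dg_def fun_eq_iff sq_sqrt_c mult.commute mult.left_commute simp del: of_nat_Suc)

lemma ideal_plus_dg_raw: "mmul (mmul cre (dg r)) ann = dg (\<lambda>i. real i * r (i - 1))"
  unfolding mmul_ann_right mmul_dg_right cre_def
  apply (auto simp: dg_def fun_eq_iff sq_sqrt_c mult.commute mult.left_commute)
  done

lemma Nminus_dg: "Nminus g (dg r) = dg (\<lambda>i. (exp (2*g) - 1) * (exp (- g * real (Suc i)))^2 * real (Suc i) * r (Suc i))"
  unfolding Nminus_def mmul_cre_right mmul_expH_right mmul_dg_right mmul_ann_left
  apply (auto simp: dg_def fun_eq_iff mscale_def power2_eq_square expH_def ann_def cre_def sq_sqrt_c mult.commute mult.left_commute simp del: of_nat_Suc)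
  done

lemma Nplus_dg: "Nplus g (dg r) = dg (\<lambda>i. (exp (2*g) - 1) * (exp (- g * real i))^2 * real i * r (i - 1))"
  unfolding Nplus_def mmul_ann_right mmul_expH_right mmul_dg_right mmul_expH_left mmul_cre_left
  apply (auto simp: dg_def fun_eq_iff mscale_def power2_eq_square expH_def ann_def cre_def sq_sqrt_c mult.commute mult.left_commute)
  done




lemma qform_superset:
  assumes "finite F" "supp_vec x \<subseteq> F"
  shows "qform S x = (\<Sum>i\<in>F. \<Sum>j\<in>F. cnj (x i) * S i j * x j)"
proof -
  have fin: "finite (supp_vec x)" using assms finite_subset by blast
  have z: "\<And>i. i \<notin> supp_vec x \<Longrightarrow> x i = 0" by (simp add: supp_vec_def)
  have "qform S x = (\<Sum>i\<in>F. \<Sum>j\<in>supp_vec x. cnj (x i) * S i j * x j)"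
    unfolding qform_def by (rule sum.mono_neutral_left[OF assms(1) assms(2)]) (auto simp: z)
  also have "\<dots> = (\<Sum>i\<in>F. \<Sum>j\<in>F. cnj (x i) * S i j * x j)"
    by (rule sum.cong[OF refl], rule sum.mono_neutral_left[OF assms(1) assms(2)]) (auto simp: z)
  finally show ?thesis .
qed

lemma cnj_d_mult: "cnj z * complex_of_real d * z = complex_of_real (d * (cmod z)^2)"
proof -
  have "cnj z * complex_of_real d * z = complex_of_real d * (z * cnj z)" by (simp add: mult_ac)
  also have "\<dots> = complex_of_real (d * (cmod z)^2)" by (simp only: complex_norm_square[symmetric] of_real_mult)
  finally show ?thesis .
qed

lemma psd_dg:
  assumes "\<And>i. d i \<ge> 0"
  shows "psd (dg d)"
  unfolding psd_def
proof (intro conjI allI impI)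
  fix i j show "dg d j i = cnj (dg d i j)" by (simp add: dg_def)
next
  fix x :: "nat \<Rightarrow> complex" assume "finite (supp_vec x)"
  have "qform (dg d) x = (\<Sum>i\<in>supp_vec x. complex_of_real (d i * (cmod (x i))^2))"
    unfolding qform_def
  proof (rule sum.cong[OF refl])
    fix i assume "i \<in> supp_vec x"
    have "(\<Sum>j\<in>supp_vec x. cnj (x i) * dg d i j * x j) = (\<Sum>j\<in>supp_vec x. if i = j then cnj (x i) * complex_of_real (d i) * x i else 0)"
      by (rule sum.cong) (auto simp: dg_def)
    also have "\<dots> = cnj (x i) * complex_of_real (d i) * x i" using \<open>i \<in> supp_vec x\<close> \<open>finite (supp_vec x)\<close> by (simp add: sum.delta)
    finally show "(\<Sum>j\<in>supp_vec x. cnj (x i) * dg d i j * x j) = complex_of_real (d i * (cmod (x i))^2)"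
      by (simp add: cnj_d_mult)
  qed
  then have "Re (qform (dg d) x) = (\<Sum>i\<in>supp_vec x. d i * (cmod (x i))^2)"
    by (simp add: Re_sum)
  also have "\<dots> \<ge> 0" by (intro sum_nonneg mult_nonneg_nonneg assms) auto
  finally show "0 \<le> Re (qform (dg d) x)" .
qed

lemma bounded_dg:
  assumes "\<And>i. \<bar>d i\<bar> \<le> c"
  shows "bounded_mat (dg d)"
  unfolding bounded_mat_def
proof (intro exI[of _ "c^2"] allI impI)
  fix x :: "nat \<Rightarrow> complex" and I :: "nat set"
  assume A: "finite (supp_vec x)" and fI: "finite I"
  have z: "\<And>i. i \<notin> supp_vec x \<Longrightarrow> x i = 0" by (simp add: supp_vec_def)
  have inner: "(\<Sum>j\<in>supp_vec x. dg d i j * x j) = complex_of_real (d i) * x i" for i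
  proof -
    have "(\<Sum>j\<in>supp_vec x. dg d i j * x j) = (\<Sum>j\<in>supp_vec x. if i = j then complex_of_real (d i) * x i else 0)"
      by (rule sum.cong) (auto simp: dg_def)
    also have "\<dots> = complex_of_real (d i) * x i" using z[of i] A by (auto simp: sum.delta)
    finally show ?thesis .
  qed
  have "(\<Sum>i\<in>I. (cmod (\<Sum>j\<in>supp_vec x. dg d i j * x j))\<^sup>2) = (\<Sum>i\<in>I. (d i)^2 * (cmod (x i))^2)"
    by (simp add: inner norm_mult power_mult_distrib)
  also have "\<dots> = (\<Sum>i\<in>I \<inter> supp_vec x. (d i)^2 * (cmod (x i))^2)"
    by (rule sum.mono_neutral_right) (auto simp: fI z)
  also have "\<dots> \<le> (\<Sum>i\<in>supp_vec x. (d i)^2 * (cmod (x i))^2)"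
    by (rule sum_mono2) (auto simp: A)
  also have "\<dots> \<le> (\<Sum>i\<in>supp_vec x. c^2 * (cmod (x i))^2)"
  proof (rule sum_mono, rule mult_right_mono)
    fix i have "\<bar>d i\<bar>^2 \<le> c^2" using assms[of i] by (intro power_mono) auto
    then show "(d i)^2 \<le> c^2" by simp
  qed auto
  also have "\<dots> = c^2 * (\<Sum>i\<in>supp_vec x. (cmod (x i))^2)" by (simp add: sum_distrib_left)
  finally show "(\<Sum>i\<in>I. (cmod (\<Sum>j\<in>supp_vec x. dg d i j * x j))\<^sup>2) \<le> c^2 * (\<Sum>j\<in>supp_vec x. (cmod (x j))\<^sup>2)" .
qed




lemma sqrt_unique:
  fixes S :: fmat
  assumes pq: "p \<noteq> q" and c: "c > 0" and bS: "bounded_mat S" and pS: "psd S"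
    and SS: "mmul S S = dg (\<lambda>i. if i = p \<or> i = q then c^2 else 0)"
  shows "S = dg (\<lambda>i. if i = p \<or> i = q then c else 0)"
proof -
  have herm: "\<And>i j. S j i = cnj (S i j)" using pS psd_def by blast
  have qf: "\<And>x. finite (supp_vec x) \<Longrightarrow> 0 \<le> Re (qform S x)" using pS psd_def by blast
  obtain C where C: "\<And>x I. finite (supp_vec x) \<Longrightarrow> finite I \<Longrightarrow>
      (\<Sum>i\<in>I. (cmod (\<Sum>j\<in>supp_vec x. S i j * x j))\<^sup>2) \<le> C * (\<Sum>j\<in>supp_vec x. (cmod (x j))\<^sup>2)"
    using bS unfolding bounded_mat_def by blast
  have col: "(\<lambda>k. (cmod (S k i))^2) summable_on UNIV" for i
  proof (rule nonneg_bdd_above_summable_on)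
    show "bdd_above (sum (\<lambda>k. (cmod (S k i))^2) ` {F. F \<subseteq> UNIV \<and> finite F})"
    proof (rule bdd_aboveI[where M=C], clarsimp)
      fix F :: "nat set" assume "finite F"
      define x where "x = (\<lambda>j. if j = i then (1::complex) else 0)"
      have sx: "supp_vec x = {i}" by (auto simp: x_def supp_vec_def)
      from C[of x F] sx \<open>finite F\<close> show "(\<Sum>k\<in>F. (cmod (S k i))^2) \<le> C" by (simp add: x_def)
    qed
  qed auto
  have cm: "cmod (S k i) = cmod (S i k)" for i k
    by (metis complex_mod_cnj herm)
  have row: "(\<lambda>k. (cmod (S i k))^2) summable_on UNIV" for i
    using col[of i] by (simp add: cm)
  have diag: "Re (mmul S S i i) = (\<Sum>\<^sub>\<infinity>k. (cmod (S i k))^2)" for i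
  proof -
    have eq: "(\<lambda>k. S i k * S k i) = (\<lambda>k. complex_of_real ((cmod (S i k))^2))"
    proof (rule ext)
      fix k
      have h: "S k i = cnj (S i k)" using herm by blast
      show "S i k * S k i = complex_of_real ((cmod (S i k))^2)" by (simp only: h complex_norm_square)
    qed
    have sm: "(\<lambda>k. S i k * S k i) summable_on UNIV" unfolding eq by (rule summable_on_of_real[OF row])
    have "Re (mmul S S i i) = Re (\<Sum>\<^sub>\<infinity>k. S i k * S k i)" by (simp add: mmul_def)
    also have "\<dots> = (\<Sum>\<^sub>\<infinity>k. Re (S i k * S k i))" by (rule infsum_Re[OF sm, symmetric])
    also have "\<dots> = (\<Sum>\<^sub>\<infinity>k. (cmod (S i k))^2)" using fun_cong[OF eq] by simp
    finally show ?thesis .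
  qed
  have zero_row: "S i k = 0" if "i \<noteq> p" "i \<noteq> q" for i k
  proof -
    have "(\<Sum>\<^sub>\<infinity>k. (cmod (S i k))^2) = 0" using diag[of i] SS that by (simp add: dg_def)
    moreover have "(cmod (S i k))^2 \<le> (\<Sum>\<^sub>\<infinity>k. (cmod (S i k))^2)"
      using infsum_mono2[of "\<lambda>k. (cmod (S i k))^2" "{k}" UNIV] row[of i] by simp
    ultimately show ?thesis by simp
  qed
  have zero_col: "S k i = 0" if "i \<noteq> p" "i \<noteq> q" for i k
    using herm[of i k] zero_row[OF that, of k] by simp
  have prod: "mmul S S i j = S i p * S p j + S i q * S q j" for i j
  proof -
    have "mmul S S i j = (\<Sum>\<^sub>\<infinity>k. S i k * S k j)" by (simp add: mmul_def)
    also have "\<dots> = (\<Sum>k\<in>{p,q}. S i k * S k j)" by (rule infsum_fin(1)) (auto simp: zero_col)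
    also have "\<dots> = S i p * S p j + S i q * S q j" using pq by simp
    finally show ?thesis .
  qed
  have E1: "S p p * S p p + S p q * S q p = complex_of_real (c^2)"
    using prod[of p p] fun_cong[OF fun_cong[OF SS, of p], of p] by (simp add: dg_def)
  have E2: "S p p * S p q + S p q * S q q = 0"
    using prod[of p q] fun_cong[OF fun_cong[OF SS, of p], of q] pq by (simp add: dg_def)
  have E3: "S q p * S p q + S q q * S q q = complex_of_real (c^2)"
    using prod[of q q] fun_cong[OF fun_cong[OF SS, of q], of q] by (simp add: dg_def)
  have dpos: "S i i = complex_of_real (Re (S i i)) \<and> Re (S i i) \<ge> 0" for i
  proof
    have h: "S i i = cnj (S i i)" using herm by blast
    have "Im (S i i) = - Im (S i i)" using arg_cong[OF h, of Im] by simp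
    then have "Im (S i i) = 0" by simp
    then show "S i i = complex_of_real (Re (S i i))" by (simp add: complex_eq_iff)
    define x where "x = (\<lambda>j. if j = i then (1::complex) else 0)"
    have "supp_vec x \<subseteq> {i}" by (auto simp: x_def supp_vec_def)
    then have "qform S x = S i i" by (subst qform_superset[of "{i}"]) (auto simp: x_def)
    moreover have "finite (supp_vec x)" using \<open>supp_vec x \<subseteq> {i}\<close> finite_subset by blast
    ultimately show "Re (S i i) \<ge> 0" using qf by metis
  qed
  have b0: "S p q = 0"
  proof (rule ccontr)
    assume b: "S p q \<noteq> 0"
    have "(S p p + S q q) * S p q = 0" using E2 by (simp add: algebra_simps)
    then have "S p p + S q q = 0" using b by simp
    then have "Re (S p p + S q q) = 0" by simp
    then have "Re (S p p) = 0" "Re (S q q) = 0" using dpos[of p] dpos[of q] by auto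
    then have "S p p = 0" "S q q = 0" using dpos[of p, THEN conjunct1] dpos[of q, THEN conjunct1] by (metis of_real_0)+
    define x where "x = (\<lambda>j. if j = p then (1::complex) else if j = q then - cnj (S p q) else 0)"
    have sx: "supp_vec x \<subseteq> {p,q}" by (auto simp: x_def supp_vec_def)
    have "qform S x = (\<Sum>i\<in>{p,q}. \<Sum>j\<in>{p,q}. cnj (x i) * S i j * x j)"
      by (rule qform_superset[OF _ sx]) simp
    also have "\<dots> = - 2 * (S p q * cnj (S p q))"
      using pq \<open>S p p = 0\<close> \<open>S q q = 0\<close> herm[of p q] by (simp add: x_def algebra_simps)
    also have "\<dots> = - 2 * complex_of_real ((cmod (S p q))^2)" by (simp only: complex_norm_square)
    finally have "Re (qform S x) = - 2 * (cmod (S p q))^2" by simp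
    moreover have "(cmod (S p q))^2 > 0" using b by simp
    moreover have "finite (supp_vec x)" using sx finite_subset by blast
    ultimately show False using qf[of x] by linarith
  qed
  have dv: "S i i = complex_of_real c" if "i = p \<or> i = q" for i
  proof -
    have "S i i * S i i = complex_of_real (c^2)" using that E1 E3 b0 herm[of p q] by auto
    moreover
    define r where "r = Re (S i i)"
    have "S i i = complex_of_real r" using dpos[of i] r_def by simp
    then have "S i i * S i i = complex_of_real (r^2)" by (simp add: power2_eq_square)
    ultimately have "complex_of_real ((Re (S i i))^2) = complex_of_real (c^2)"
      using r_def by simp
    then have "(Re (S i i))^2 = c^2" by (simp only: of_real_eq_iff)
    then have "Re (S i i) = c" using dpos[of i] c by (simp add: power2_eq_iff_nonneg)
    then show ?thesis using dpos[of i] by simp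
  qed
  show ?thesis
  proof (rule ext, rule ext)
    fix i j
    show "S i j = dg (\<lambda>i. if i = p \<or> i = q then c else 0) i j"
    proof (cases "(i = p \<or> i = q) \<and> (j = p \<or> j = q)")
      case True
      then show ?thesis using dv b0 herm[of p q] pq by (auto simp: dg_def)
    next
      case False
      then show ?thesis using zero_row zero_col by (auto simp: dg_def)
    qed
  qed
qed




lemma trace_norm_two:
  assumes pq: "p \<noteq> q" and a: "a \<noteq> 0"
    and d: "\<And>i. d i = (if i = p then a else if i = q then - a else 0)"
  shows "trace_norm (dg d) = 2 * \<bar>a\<bar>"
proof -
  define s where "s = (\<lambda>i. if i = p \<or> i = q then \<bar>a\<bar> else 0)"
  have T: "mmul (adj (dg d)) (dg d) = dg (\<lambda>i. if i = p \<or> i = q then \<bar>a\<bar>^2 else 0)"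
    unfolding adj_dg mmul_dg by (rule arg_cong[where f=dg], rule ext) (auto simp: d power2_eq_square)
  have SS: "mmul (dg s) (dg s) = dg (\<lambda>i. if i = p \<or> i = q then \<bar>a\<bar>^2 else 0)"
    unfolding mmul_dg by (rule arg_cong[where f=dg], rule ext) (auto simp: s_def power2_eq_square)
  have bs: "bounded_mat (dg s)" by (rule bounded_dg[of _ "\<bar>a\<bar>"]) (auto simp: s_def)
  have ps: "psd (dg s)" by (rule psd_dg) (auto simp: s_def)
  have "mabs (dg d) = dg s"
    unfolding mabs_def
  proof (rule the_equality)
    show "bounded_mat (dg s) \<and> psd (dg s) \<and> mmul (dg s) (dg s) = mmul (adj (dg d)) (dg d)"
      using bs ps SS T by simp
  next
    fix S assume "bounded_mat S \<and> psd S \<and> mmul S S = mmul (adj (dg d)) (dg d)"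
    then show "S = dg s" unfolding s_def T using sqrt_unique[OF pq, of "\<bar>a\<bar>" S] a by auto
  qed
  then have "trace_norm (dg d) = (\<Sum>\<^sub>\<infinity>n. s n)" unfolding trace_norm_def by (simp add: dg_def)
  also have "\<dots> = (\<Sum>n\<in>{p,q}. s n)" by (rule infsum_fin(1)) (auto simp: s_def)
  also have "\<dots> = 2 * \<bar>a\<bar>" using pq by (simp add: s_def)
  finally show ?thesis .
qed

lemma diff_two:
  assumes pq: "p \<noteq> q" and e: "0 < e2" "e2 < e1"
  shows "trace_norm (dg (\<lambda>i. if i = p then 1/2 else if i = q then 1/2 else 0)
          - dg (\<lambda>i. if i = p then e1/(e1+e2) else if i = q then e2/(e1+e2) else 0)) = (e1 - e2)/(e1 + e2)"
proof -
  define a where "a = (e2 - e1) / (2 * (e1 + e2))"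
  have a0: "a \<noteq> 0" using e by (simp add: a_def)
  have "trace_norm (dg (\<lambda>i. if i = p then a else if i = q then - a else 0)) = 2 * \<bar>a\<bar>"
    by (rule trace_norm_two[OF pq a0]) simp
  moreover have "dg (\<lambda>i. if i = p then 1/2 else if i = q then 1/2 else 0)
          - dg (\<lambda>i. if i = p then e1/(e1+e2) else if i = q then e2/(e1+e2) else 0)
        = dg (\<lambda>i. if i = p then a else if i = q then - a else 0)"
  proof -
    have ne: "e1 + e2 \<noteq> 0" using e by simp
    have pos: "e1 + e2 > 0" using e by simp
    have h1: "1/2 - e1/(e1+e2) = a" unfolding a_def using pos by (simp add: field_simps)
    have h2: "1/2 - e2/(e1+e2) = - a" unfolding a_def using pos by (simp add: field_simps)
    show ?thesis unfolding minus_dg by (intro arg_cong[where f=dg] ext) (auto simp only: h1 h2 pq if_True if_False split: if_split)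
  qed
  moreover have "2 * \<bar>a\<bar> = (e1 - e2)/(e1 + e2)" using e by (simp add: a_def abs_if field_simps)
  ultimately show ?thesis by simp
qed

lemma exp_ineq:
  assumes g: "g > 0" and s: "0 \<le> s" "s < 1" and n: "ln ((1+s)/(1-s)) / (2*g) < real n"
    and e1: "e1 = (exp (- g * x))^2" and e2: "e2 = (exp (- g * (x + real n)))^2"
  shows "s \<le> (e1 - e2)/(e1 + e2)" "0 < e2" "e2 < e1"
proof -
  define y where "y = (1+s)/(1-s)"
  have y: "y > 0" using s by (simp add: y_def)
  have "ln y / (2*g) < real n" using n by (simp add: y_def)
  then have "ln y < real n * (2 * g)" using g by (simp add: divide_less_eq)
  then have "exp (ln y) < exp (2 * g * real n)" by (simp add: mult.commute)
  then have yl: "y < exp (2 * g * real n)" using y by simp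
  have ex: "- g * (x + real n) + - g * (x + real n) = (- g * x + - g * x) + - (2 * g * real n)" by algebra
  have e2e: "e2 = e1 * exp (- (2 * g * real n))"
    unfolding e1 e2 by (simp only: power2_eq_square exp_add[symmetric] ex)
  have e1p: "e1 > 0" unfolding e1 by simp
  have q: "exp (- (2 * g * real n)) < 1 / y"
  proof -
    have "exp (- (2 * g * real n)) = 1 / exp (2 * g * real n)" by (simp add: exp_minus inverse_eq_divide)
    also have "\<dots> < 1 / y" using yl y by (intro divide_strict_left_mono) auto
    finally show ?thesis .
  qed
  show "0 < e2" unfolding e2 by simp
  have y1: "1 \<le> y" using s by (simp add: y_def)
  have "1 / y \<le> 1" using y1 by simp
  then have "exp (- (2 * g * real n)) < 1" using q by linarith
  then show "e2 < e1" using e2e e1p by simp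
  have "e1 * exp (- (2 * g * real n)) \<le> e1 * (1 / y)" using q e1p by (intro mult_left_mono) auto
  then have "e2 \<le> e1 * (1 / y)" using e2e by simp
  then have "e2 * (1 + s) \<le> e1 * (1 / y) * (1 + s)" using s by (intro mult_right_mono) auto
  moreover have "e1 * (1 / y) * (1 + s) = e1 * (1 - s)" using s by (simp add: y_def field_simps)
  ultimately have h: "e2 * (1 + s) \<le> e1 * (1 - s)" by simp
  have "s * (e1 + e2) \<le> e1 - e2" using h by (simp add: algebra_simps)
  then show "s \<le> (e1 - e2)/(e1 + e2)" using e1p \<open>0 < e2\<close> by (simp add: le_divide_eq)
qed




lemma minus_case:
  assumes g: "g > 0" and s: "0 \<le> s" "s < 1" and n: "ln ((1+s)/(1-s)) / (2*g) < real n"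
  shows "\<exists>\<rho>. density \<rho> \<and> energy_finite \<rho> \<and> 0 < energy \<rho> \<and> energy \<rho> \<le> 1 \<and>
           s \<le> trace_norm (ideal_minus \<rho> - normalize (Nminus g \<rho>))"
proof -
  define M where "M = n + 2"
  define r where "r = (\<lambda>k::nat. if k = 0 then 1/2 - 1/(2*real M) else if k = 1 then 1/2
                         else if k = M then 1/(2*real M) else (0::real))"
  have M: "M \<noteq> 0" "M \<noteq> 1" "real M \<ge> 2" by (auto simp: M_def)
  have rnn: "r k \<ge> 0" for k
  proof -
    have "1/(2*real M) \<le> 1/2" using M by (simp add: field_simps)
    then show ?thesis by (auto simp: r_def)
  qed
  have rz: "r k = 0" if "k \<notin> {0,1,M}" for k using that by (auto simp: r_def)
  have sumr: "sum r {0,1,M} = 1" using M by (simp add: r_def)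
  have dens: "density (dg r)"
    unfolding density_def
  proof (intro conjI)
    show "psd (dg r)" by (rule psd_dg[OF rnn])
    show "(\<lambda>n. dg r n n) summable_on UNIV" by (rule infsum_fin(2)[of "{0,1,M}"]) (auto simp: dg_def rz)
    have "mtrace (dg r) = complex_of_real (sum r {0,1,M})" by (rule mtrace_dg) (auto simp: rz)
    then show "mtrace (dg r) = 1" by (simp only: sumr of_real_1)
  qed
  have ef: "energy_finite (dg r)" unfolding energy_finite_def
    by (rule infsum_fin(2)[of "{0,1,M}"]) (auto simp: dg_def rz)
  have en: "energy (dg r) = 1"
  proof -
    have "energy (dg r) = (\<Sum>k\<in>{0,1,M}. real k * Re (dg r k k))"
      unfolding energy_def by (rule infsum_fin(1)) (auto simp: dg_def rz)
    also have "\<dots> = 1" using M by (simp add: dg_def r_def)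
    finally show ?thesis .
  qed
  have f1: "(\<lambda>i. real (Suc i) * r (Suc i)) = (\<lambda>i. if i = 0 then 1/2 else if i = n+1 then 1/2 else 0)"
  proof (rule ext)
    fix i show "real (Suc i) * r (Suc i) = (if i = 0 then 1/2 else if i = n+1 then 1/2 else 0)"
      using M by (cases "i = 0"; cases "i = n+1") (auto simp: r_def M_def field_simps)
  qed
  have I: "ideal_minus (dg r) = dg (\<lambda>i. if i = 0 then 1/2 else if i = n+1 then 1/2 else 0)"
  proof -
    have "ideal_minus (dg r) = normalize (dg (\<lambda>i. if i = 0 then 1/2 else if i = n+1 then 1/2 else 0))"
      unfolding ideal_minus_def ideal_minus_dg_raw f1 ..
    also have "\<dots> = dg (\<lambda>i. (if i = 0 then 1/2 else if i = n+1 then 1/2 else 0) / 1)"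
      by (subst normalize_dg[of "{0, n+1}"]) auto
    finally show ?thesis by simp
  qed
  define K where "K = exp (2*g) - 1"
  have K: "K > 0" using g by (simp add: K_def)
  define e1 where "e1 = (exp (- g * 1))^2"
  define e2 where "e2 = (exp (- g * (1 + real (Suc n))))^2"
  have f2: "(\<lambda>i. (exp (2*g) - 1) * (exp (- g * real (Suc i)))^2 * real (Suc i) * r (Suc i))
          = (\<lambda>i. if i = 0 then K * e1 / 2 else if i = n+1 then K * e2 / 2 else 0)"
  proof (rule ext)
    fix i show "(exp (2*g) - 1) * (exp (- g * real (Suc i)))^2 * real (Suc i) * r (Suc i)
          = (if i = 0 then K * e1 / 2 else if i = n+1 then K * e2 / 2 else 0)"
      using M by (cases "i = 0"; cases "i = n+1") (auto simp: r_def M_def K_def e1_def e2_def field_simps)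
  qed
  obtain ei: "s \<le> (e1 - e2)/(e1 + e2)" "0 < e2" "e2 < e1"
    using exp_ineq[OF g s, of "Suc n" e1 1 e2] n e1_def e2_def by force
  have N: "normalize (Nminus g (dg r)) = dg (\<lambda>i. if i = 0 then e1/(e1+e2) else if i = n+1 then e2/(e1+e2) else 0)"
  proof -
    have "normalize (Nminus g (dg r)) = normalize (dg (\<lambda>i. if i = 0 then K * e1 / 2 else if i = n+1 then K * e2 / 2 else 0))"
      unfolding Nminus_dg f2 ..
    also have "\<dots> = dg (\<lambda>i. (if i = 0 then K * e1 / 2 else if i = n+1 then K * e2 / 2 else 0) / (K * e1 / 2 + K * e2 / 2))"
      by (subst normalize_dg[of "{0, n+1}"]) auto
    also have "\<dots> = dg (\<lambda>i. if i = 0 then e1/(e1+e2) else if i = n+1 then e2/(e1+e2) else 0)"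
    proof -
      have ne: "K * e1 / 2 + K * e2 / 2 = (K/2) * (e1 + e2)" by (simp add: algebra_simps)
      have k2: "K/2 \<noteq> 0" using K by simp
      have h1: "K * e1 / 2 / (K * e1 / 2 + K * e2 / 2) = e1/(e1+e2)"
        unfolding ne using k2 by (simp add: mult.commute)
      have h2: "K * e2 / 2 / (K * e1 / 2 + K * e2 / 2) = e2/(e1+e2)"
        unfolding ne using k2 by (simp add: mult.commute)
      have ne': "K * e1 + K * e2 = K * (e1 + e2)" by (simp add: algebra_simps)
      have h1': "K * e1 / (K * e1 + K * e2) = e1/(e1+e2)" unfolding ne' using K by simp
      have h2': "K * e2 / (K * e1 + K * e2) = e2/(e1+e2)" unfolding ne' using K by simp
      show ?thesis
        apply (intro arg_cong[where f=dg] ext)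
        subgoal for i by (cases "i = 0"; cases "i = n+1") (auto simp: h1' h2')
        done
    qed
    finally show ?thesis .
  qed
  have "trace_norm (ideal_minus (dg r) - normalize (Nminus g (dg r))) = (e1 - e2)/(e1 + e2)"
    unfolding I N by (rule diff_two) (use ei in auto)
  then show ?thesis using dens ef en ei by (intro exI[of _ "dg r"]) auto
qed


lemma plus_case:
  assumes g: "g > 0" and s: "0 \<le> s" "s < 1" and n: "ln ((1+s)/(1-s)) / (2*g) < real n"
  shows "\<exists>\<rho>. density \<rho> \<and> energy_finite \<rho> \<and> 0 < energy \<rho> \<and> energy \<rho> \<le> 1 \<and>
           s \<le> trace_norm (ideal_plus \<rho> - normalize (Nplus g \<rho>))"
proof -
  define M where "M = n + 1"
  define r where "r = (\<lambda>k::nat. if k = 0 then (real M + 1)/(real M + 2)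
                         else if k = M then 1/(real M + 2) else (0::real))"
  have M: "M \<noteq> 0" "real M \<ge> 1" by (auto simp: M_def)
  have rnn: "r k \<ge> 0" for k by (auto simp: r_def)
  have rz: "r k = 0" if "k \<notin> {0,M}" for k using that by (auto simp: r_def)
  have sumr: "sum r {0,M} = 1" using M by (simp add: r_def field_simps)
  have dens: "density (dg r)"
    unfolding density_def
  proof (intro conjI)
    show "psd (dg r)" by (rule psd_dg[OF rnn])
    show "(\<lambda>n. dg r n n) summable_on UNIV" by (rule infsum_fin(2)[of "{0,M}"]) (auto simp: dg_def rz)
    have "mtrace (dg r) = complex_of_real (sum r {0,M})" by (rule mtrace_dg) (auto simp: rz)
    then show "mtrace (dg r) = 1" by (simp only: sumr of_real_1)
  qed
  have ef: "energy_finite (dg r)" unfolding energy_finite_def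
    by (rule infsum_fin(2)[of "{0,M}"]) (auto simp: dg_def rz)
  have en: "energy (dg r) = real M / (real M + 2)"
  proof -
    have "energy (dg r) = (\<Sum>k\<in>{0,M}. real k * Re (dg r k k))"
      unfolding energy_def by (rule infsum_fin(1)) (auto simp: dg_def rz)
    also have "\<dots> = real M / (real M + 2)" using M by (simp add: dg_def r_def)
    finally show ?thesis .
  qed
  have en1: "0 < energy (dg r)" "energy (dg r) \<le> 1" using M unfolding en by (auto simp: field_simps)
  define w where "w = (real M + 1)/(real M + 2)"
  have w: "w > 0" by (simp add: w_def add_pos_pos)
  have f1: "(\<lambda>i. real i * r (i - 1)) = (\<lambda>i. if i = 1 then w else if i = n+2 then w else 0)"
  proof (rule ext)
    fix i show "real i * r (i - 1) = (if i = 1 then w else if i = n+2 then w else 0)"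
      using M by (cases "i = 1"; cases "i = n+2") (auto simp: r_def M_def w_def field_simps)
  qed
  have I: "ideal_plus (dg r) = dg (\<lambda>i. if i = 1 then 1/2 else if i = n+2 then 1/2 else 0)"
  proof -
    have "ideal_plus (dg r) = normalize (dg (\<lambda>i. if i = 1 then w else if i = n+2 then w else 0))"
      unfolding ideal_plus_def ideal_plus_dg_raw f1 ..
    also have "\<dots> = dg (\<lambda>i. (if i = 1 then w else if i = n+2 then w else 0) / (w + w))"
      by (subst normalize_dg[of "{1, n+2}"]) auto
    also have "\<dots> = dg (\<lambda>i. if i = 1 then 1/2 else if i = n+2 then 1/2 else 0)"
      using w by (intro arg_cong[where f=dg] ext) auto
    finally show ?thesis .
  qed
  define K where "K = exp (2*g) - 1"
  have K: "K > 0" using g by (simp add: K_def)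
  define e1 where "e1 = (exp (- g * 1))^2"
  define e2 where "e2 = (exp (- g * (1 + real (Suc n))))^2"
  have f2: "(\<lambda>i. (exp (2*g) - 1) * (exp (- g * real i))^2 * real i * r (i - 1))
          = (\<lambda>i. if i = 1 then K * w * e1 else if i = n+2 then K * w * e2 else 0)"
  proof (rule ext)
    fix i show "(exp (2*g) - 1) * (exp (- g * real i))^2 * real i * r (i - 1)
          = (if i = 1 then K * w * e1 else if i = n+2 then K * w * e2 else 0)"
      using M by (cases "i = 1"; cases "i = n+2") (auto simp: r_def M_def K_def e1_def e2_def w_def field_simps)
  qed
  obtain ei: "s \<le> (e1 - e2)/(e1 + e2)" "0 < e2" "e2 < e1"
    using exp_ineq[OF g s, of "Suc n" e1 1 e2] n e1_def e2_def by force
  have N: "normalize (Nplus g (dg r)) = dg (\<lambda>i. if i = 1 then e1/(e1+e2) else if i = n+2 then e2/(e1+e2) else 0)"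
  proof -
    have "normalize (Nplus g (dg r)) = normalize (dg (\<lambda>i. if i = 1 then K * w * e1 else if i = n+2 then K * w * e2 else 0))"
      unfolding Nplus_dg f2 ..
    also have "\<dots> = dg (\<lambda>i. (if i = 1 then K * w * e1 else if i = n+2 then K * w * e2 else 0) / (K * w * e1 + K * w * e2))"
      by (subst normalize_dg[of "{1, n+2}"]) auto
    also have "\<dots> = dg (\<lambda>i. if i = 1 then e1/(e1+e2) else if i = n+2 then e2/(e1+e2) else 0)"
    proof -
      have ne': "K * w * e1 + K * w * e2 = (K * w) * (e1 + e2)" by (simp add: algebra_simps)
      have kw: "K * w \<noteq> 0" using K w by simp
      have h1': "K * w * e1 / (K * w * e1 + K * w * e2) = e1/(e1+e2)" unfolding ne' using kw by simp
      have h2': "K * w * e2 / (K * w * e1 + K * w * e2) = e2/(e1+e2)" unfolding ne' using kw by simp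
      show ?thesis
        apply (intro arg_cong[where f=dg] ext)
        subgoal for i by (cases "i = 1"; cases "i = n+2") (simp_all add: h1' h2' del: times_divide_eq_left)
        done
    qed
    finally show ?thesis .
  qed
  have "trace_norm (ideal_plus (dg r) - normalize (Nplus g (dg r))) = (e1 - e2)/(e1 + e2)"
    unfolding I N by (rule diff_two) (use ei in auto)
  then show ?thesis using dens ef en1 ei by (intro exI[of _ "dg r"]) auto
qed


theorem proposition2:
  shows "(\<forall>g::real. \<forall>E::real. g > 0 \<longrightarrow> E > 0 \<longrightarrow>
            (\<exists>\<rho>. density \<rho> \<and> energy_finite \<rho> \<and> 0 < energy \<rho> \<and> energy \<rho> \<le> E + 1 \<and>
                 trace_norm (ideal_minus \<rho> - normalize (Nminus g \<rho>)) \<ge> sqrt (E / (E + 1))))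
       \<and> (\<forall>g::real. \<forall>E::real. g > 0 \<longrightarrow> E > 0 \<longrightarrow>
            (\<exists>\<rho>. density \<rho> \<and> energy_finite \<rho> \<and> 0 < energy \<rho> \<and> energy \<rho> \<le> E + 1 \<and>
                 trace_norm (ideal_plus \<rho> - normalize (Nplus g \<rho>)) \<ge> sqrt (E / (E + 1))))"
proof (intro conjI allI impI)
  fix g E :: real assume g: "g > 0" and E: "E > 0"
  define s where "s = sqrt (E / (E + 1))"
  have s0: "0 \<le> s" using E by (simp add: s_def)
  have "E / (E + 1) < 1" using E by simp
  then have s1: "s < 1" by (simp add: s_def)
  obtain n :: nat where n: "ln ((1+s)/(1-s)) / (2*g) < real n" using reals_Archimedean2 by blast
  {
    from minus_case[OF g s0 s1 n] obtain \<rho> where "density \<rho> \<and> energy_finite \<rho> \<and> 0 < energy \<rho> \<and> energy \<rho> \<le> 1 \<and>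
           s \<le> trace_norm (ideal_minus \<rho> - normalize (Nminus g \<rho>))" by blast
    then show "\<exists>\<rho>. density \<rho> \<and> energy_finite \<rho> \<and> 0 < energy \<rho> \<and> energy \<rho> \<le> E + 1 \<and>
                 trace_norm (ideal_minus \<rho> - normalize (Nminus g \<rho>)) \<ge> sqrt (E / (E + 1))"
      using E unfolding s_def by (intro exI[of _ \<rho>]) auto
  }
  {
    from plus_case[OF g s0 s1 n] obtain \<rho> where "density \<rho> \<and> energy_finite \<rho> \<and> 0 < energy \<rho> \<and> energy \<rho> \<le> 1 \<and>
           s \<le> trace_norm (ideal_plus \<rho> - normalize (Nplus g \<rho>))" by blast
    then show "\<exists>\<rho>. density \<rho> \<and> energy_finite \<rho> \<and> 0 < energy \<rho> \<and> energy \<rho> \<le> E + 1 \<and>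
                 trace_norm (ideal_plus \<rho> - normalize (Nplus g \<rho>)) \<ge> sqrt (E / (E + 1))"
      using E unfolding s_def by (intro exI[of _ \<rho>]) auto
  }
qed

end
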